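(* Let $Z_u > 0$, $Z_{\bar u} \ge 0$, $Z_u^y$ and $Z_{\bar u}^y$ be real numbers with $0 < Z_u^y \le Z_u$ and $0 \le Z_{\bar u}^y \le Z_{\bar u}$, and let $w \ge Z_{\bar u}$. Put $Z_\rho = Z_u + Z_{\bar u}$ and $Z_\rho^y = Z_u^y + Z_{\bar u}^y$. Then \[ \mathrm{KL}\!\left(\mathcal{B}\!\left(\tfrac{Z_u^y}{Z_\rho^y}\right)\,\middle\|\,\mathcal{B}\!\left(\tfrac{Z_u}{Z_\rho}\right)\right) \;\le\; \lg\frac{Z_u + w}{Z_u^y}. \]
   Context: Interpretation (for motivation only): for a leaf $\rho$ of a decision tree, $Z_u, Z_{\bar u}$ are the total boosting weights of assessed (seen) and unassessed (unseen) training examples reaching $\rho$, $Z_u^y, Z_{\bar u}^y$ are the corresponding weights of examples with label $y$, and $w$ is the total unseen weight over all leaves. $\lg$ is the base-2 logarithm with $0\lg 0=0$ and $0\lg(0/0)=0$. $\mathcal{B}(p)$ is the Bernoulli distribution with parameter $p$, and $\mathrm{KL}(\mathcal{B}(p)\|\mathcal{B}(q)) = p\lg\frac{p}{q} + (1-p)\lg\frac{1-p}{1-q}$. *)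

theory Defs
  imports Complex_Main
begin

definition lg :: "real \<Rightarrow> real" where
  "lg x = log 2 x"

definition plg :: "real \<Rightarrow> real \<Rightarrow> real" where
  "plg p q = (if p = 0 then 0 else p * lg (p / q))"

definition KL_bern :: "real \<Rightarrow> real \<Rightarrow> real" where
  "KL_bern p q = plg p q + plg (1 - p) (1 - q)"

end

theory Submission
  imports Defs
begin

lemma plg_le:
  assumes "p \<ge> 0" and "p > 0 \<Longrightarrow> 0 < p / q \<and> p / q \<le> M"
  shows "plg p q \<le> p * lg M"
proof (cases "p = 0")
  case True thus ?thesis by (simp add: plg_def)
next
  case False
  hence pp: "p > 0" using assms(1) by simp
  with assms(2) have h: "0 < p / q" "p / q \<le> M" by auto
  have "lg (p/q) \<le> lg M" unfolding lg_def using h by simp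
  hence "p * lg (p/q) \<le> p * lg M" using pp by (simp add: mult_left_mono)
  thus ?thesis using False by (simp add: plg_def)
qed

lemma l1: fixes a b A B :: real assumes "a>0" "a \<le> A" "b \<ge> 0" "B \<ge> 0"
  shows "a * (A + B) / ((a + b) * A) \<le> (A + B) / a"
proof -
  have "a * a \<le> a * A" using assms by (intro mult_left_mono) auto
  also have "\<dots> \<le> (a + b) * A" using assms by (intro mult_right_mono) auto
  finally have "a * a * (A + B) \<le> (a + b) * A * (A + B)" using assms by (intro mult_right_mono) auto
  hence "a * (A + B) * a \<le> (A + B) * ((a + b) * A)" by (simp add: algebra_simps)
  moreover have "(a + b) * A > 0" "a > 0" using assms by auto
  ultimately show ?thesis by (simp add: frac_le_eq divide_le_eq le_divide_eq pos_divide_le_eq pos_le_divide_eq)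
qed

lemma l2: fixes a b A B :: real assumes "a>0" "a \<le> A" "b > 0" "b \<le> B"
  shows "b * (A + B) / ((a + b) * B) \<le> (A + B) / a"
proof -
  have "b * a \<le> B * a" using assms by (intro mult_right_mono) auto
  also have "\<dots> \<le> B * (a + b)" using assms by (intro mult_left_mono) auto
  finally have "b * a * (A + B) \<le> B * (a + b) * (A + B)" using assms by (intro mult_right_mono) auto
  hence "b * (A + B) * a \<le> (A + B) * ((a + b) * B)" by (simp add: algebra_simps)
  moreover have "(a + b) * B > 0" "a > 0" using assms by auto
  ultimately show ?thesis by (simp add: frac_le_eq divide_le_eq le_divide_eq pos_divide_le_eq pos_le_divide_eq)
qed

theorem mainTheorem2:
  fixes Zu Zubar Zuy Zubary w :: real
  assumes "Zu > 0" and "Zubar \<ge> 0"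
    and "0 < Zuy" and "Zuy \<le> Zu"
    and "0 \<le> Zubary" and "Zubary \<le> Zubar"
    and "w \<ge> Zubar"
  shows "KL_bern (Zuy / (Zuy + Zubary)) (Zu / (Zu + Zubar)) \<le> lg ((Zu + w) / Zuy)"
proof -
  define a b A B where "a = Zuy" "b = Zubary" "A = Zu" "B = Zubar"
  have a: "a > 0" "a \<le> A" "A > 0" "b \<ge> 0" "b \<le> B" "B \<ge> 0" "w \<ge> B"
    using assms by (auto simp: a_b_A_B_def)
  define M where "M = (A + B) / a"
  define p where "p = a / (a + b)"
  have p1: "1 - p = b / (a + b)" using a by (simp add: p_def field_simps)
  have q1: "1 - A / (A + B) = B / (A + B)" using a by (simp add: field_simps)
  have p0: "p \<ge> 0" "1 - p \<ge> 0" using a p1 by (auto simp: p_def)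
  have r1: "p / (A / (A + B)) = a * (A + B) / ((a + b) * A)" using a
    by (simp add: p_def field_simps)
  have "plg p (A / (A + B)) \<le> p * lg M"
  proof (rule plg_le[OF p0(1)])
    have "a * (A + B) / ((a + b) * A) \<le> M"
      unfolding M_def using a by (intro l1) auto
    moreover have "a * (A + B) / ((a + b) * A) > 0" using a by simp
    ultimately show "0 < p / (A / (A + B)) \<and> p / (A / (A + B)) \<le> M" using r1 by simp
  qed
  moreover have "plg (1 - p) (1 - A / (A + B)) \<le> (1 - p) * lg M"
  proof (rule plg_le[OF p0(2)])
    assume "1 - p > 0"
    hence b0: "b > 0" using p1 a by (cases "b = 0") auto
    hence B0: "B > 0" using a by simp
    have r2: "(1 - p) / (1 - A / (A + B)) = b * (A + B) / ((a + b) * B)"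
      unfolding p1 q1 using a B0 by (simp add: field_simps)
    have "b * (A + B) / ((a + b) * B) \<le> M"
      unfolding M_def using a b0 by (intro l2) auto
    moreover have "b * (A + B) / ((a + b) * B) > 0" using a b0 B0 by simp
    ultimately show "0 < (1 - p) / (1 - A / (A + B)) \<and> (1 - p) / (1 - A / (A + B)) \<le> M"
      using r2 by simp
  qed
  ultimately have "KL_bern p (A / (A + B)) \<le> p * lg M + (1 - p) * lg M"
    unfolding KL_bern_def by linarith
  also have "p * lg M + (1 - p) * lg M = lg M" by (simp add: algebra_simps)
  also have "lg M \<le> lg ((A + w) / a)"
    unfolding lg_def M_def using a by (simp add: divide_right_mono)
  finally show ?thesis by (simp add: a_b_A_B_def p_def)
qed

end
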